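(* The set of operators $T\in\mathscr{L}(\mathscr{M}(\Omega))$ that are $\sigma(\mathscr{M}(\Omega),C_b(\Omega))$-continuous (equivalently, weakly continuous operators whose norm adjoint $T^*$ maps $C_b(\Omega)$ into $C_b(\Omega)$) is in general not a sublattice of $\mathscr{L}(\mathscr{M}(\Omega),\sigma)$: there exist a Polish space $\Omega$ (e.g. $\Omega=\{0\}\cup\{\pm 1/n:n\in\mathbb{N}\}\subset\mathbb{R}$) and a weakly continuous operator $T$ with $T^*C_b(\Omega)\subset C_b(\Omega)$ such that the weakly continuous operator associated with $\lvert k\rvert$ ($k$ the kernel of $T$) does not leave $C_b(\Omega)$ invariant under its adjoint, and moreover $T$ has no modulus in the ordered space of $\sigma(\mathscr{M}(\Omega),C_b(\Omega))$-continuous operators.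
   Context: $\Omega$ Polish, $\mathscr{M}(\Omega)$ the finite signed Borel measures, $C_b(\Omega)$ the bounded continuous functions, $B_b(\Omega)$ the bounded Borel functions, with duality $\langle f,\mu\rangle=\int f\,d\mu$. A transition kernel is a map $k:\Omega\times\mathscr{B}(\Omega)\to\mathbb{R}$, signed measure in the second variable and Borel measurable in the first; bounded if $\sup_x\lvert k\rvert(x,\Omega)<\infty$. A weakly continuous operator is one of the form $(T\mu)(A)=\int k(x,A)\,d\mu(x)$ with $k$ a bounded transition kernel (its associated kernel); $\mathscr{L}(\mathscr{M}(\Omega),\sigma)$ is the space of these. Operators are ordered by positivity: $S\le T$ iff $S\mu\le T\mu$ for all positive $\mu$. *)

theory Defs
  imports "HOL-Analysis.Analysis"
begin

text \<open>Finite signed measures on a measurable space M, given as real-valued set functions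
  (only their values on sets M matter).\<close>
definition signed_measure :: "'a measure \<Rightarrow> ('a set \<Rightarrow> real) \<Rightarrow> bool" where
  "signed_measure M \<mu> \<longleftrightarrow> \<mu> {} = 0 \<and>
     (\<forall>A :: nat \<Rightarrow> 'a set. range A \<subseteq> sets M \<longrightarrow> disjoint_family A \<longrightarrow>
        (\<lambda>i. \<mu> (A i)) sums \<mu> (\<Union>i. A i))"

definition positive_measure :: "'a measure \<Rightarrow> ('a set \<Rightarrow> real) \<Rightarrow> bool" where
  "positive_measure M \<mu> \<longleftrightarrow> signed_measure M \<mu> \<and> (\<forall>A\<in>sets M. 0 \<le> \<mu> A)"

definition tv :: "'a measure \<Rightarrow> ('a set \<Rightarrow> real) \<Rightarrow> 'a set \<Rightarrow> real" where
  "tv M \<mu> A = Sup {(\<Sum>B\<in>P. \<bar>\<mu> B\<bar>) | P. finite P \<and> P \<subseteq> sets M \<and> disjoint P \<and> \<Union>P = A}"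

definition pos_part :: "'a measure \<Rightarrow> ('a set \<Rightarrow> real) \<Rightarrow> 'a measure" where
  "pos_part M \<mu> = measure_of (space M) (sets M) (\<lambda>A. ennreal ((tv M \<mu> A + \<mu> A) / 2))"

definition neg_part :: "'a measure \<Rightarrow> ('a set \<Rightarrow> real) \<Rightarrow> 'a measure" where
  "neg_part M \<mu> = measure_of (space M) (sets M) (\<lambda>A. ennreal ((tv M \<mu> A - \<mu> A) / 2))"

definition sintegral :: "'a measure \<Rightarrow> ('a set \<Rightarrow> real) \<Rightarrow> ('a \<Rightarrow> real) \<Rightarrow> real" where
  "sintegral M \<mu> f = integral\<^sup>L (pos_part M \<mu>) f - integral\<^sup>L (neg_part M \<mu>) f"

definition bounded_kernel :: "'a measure \<Rightarrow> ('a \<Rightarrow> 'a set \<Rightarrow> real) \<Rightarrow> bool" where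
  "bounded_kernel M k \<longleftrightarrow>
     (\<forall>x\<in>space M. signed_measure M (k x)) \<and>
     (\<forall>A\<in>sets M. (\<lambda>x. k x A) \<in> borel_measurable M) \<and>
     (\<exists>C. \<forall>x\<in>space M. tv M (k x) (space M) \<le> C)"

definition kop :: "'a measure \<Rightarrow> ('a \<Rightarrow> 'a set \<Rightarrow> real) \<Rightarrow> ('a set \<Rightarrow> real) \<Rightarrow> ('a set \<Rightarrow> real)" where
  "kop M k \<mu> = (\<lambda>A. sintegral M \<mu> (\<lambda>x. k x A))"

definition kadj :: "'a measure \<Rightarrow> ('a \<Rightarrow> 'a set \<Rightarrow> real) \<Rightarrow> ('a \<Rightarrow> real) \<Rightarrow> ('a \<Rightarrow> real)" where
  "kadj M k f = (\<lambda>x. sintegral M (k x) f)"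

definition Cb :: "'a::topological_space set \<Rightarrow> ('a \<Rightarrow> real) set" where
  "Cb S = {f. continuous_on S f \<and> (\<exists>C. \<forall>x\<in>S. \<bar>f x\<bar> \<le> C)}"

definition Cb_invariant :: "'a::topological_space measure \<Rightarrow> ('a \<Rightarrow> 'a set \<Rightarrow> real) \<Rightarrow> bool" where
  "Cb_invariant M k \<longleftrightarrow> (\<forall>f\<in>Cb (space M). kadj M k f \<in> Cb (space M))"

text \<open>sigma(M, C_b)-continuous operators: weakly continuous with C_b-invariant adjoint.\<close>
definition sigma_Cb_ops :: "'a::topological_space measure \<Rightarrow> ('a \<Rightarrow> 'a set \<Rightarrow> real) set" where
  "sigma_Cb_ops M = {k. bounded_kernel M k \<and> Cb_invariant M k}"

definition op_le :: "'a measure \<Rightarrow> ('a \<Rightarrow> 'a set \<Rightarrow> real) \<Rightarrow> ('a \<Rightarrow> 'a set \<Rightarrow> real) \<Rightarrow> bool" where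
  "op_le M S T \<longleftrightarrow> (\<forall>\<mu>. positive_measure M \<mu> \<longrightarrow> (\<forall>A\<in>sets M. kop M S \<mu> A \<le> kop M T \<mu> A))"

definition is_modulus_in :: "'a measure \<Rightarrow> ('a \<Rightarrow> 'a set \<Rightarrow> real) set \<Rightarrow>
    ('a \<Rightarrow> 'a set \<Rightarrow> real) \<Rightarrow> ('a \<Rightarrow> 'a set \<Rightarrow> real) \<Rightarrow> bool" where
  "is_modulus_in M V T S \<longleftrightarrow> S \<in> V \<and> op_le M T S \<and> op_le M (\<lambda>x A. - T x A) S \<and>
     (\<forall>R\<in>V. op_le M T R \<longrightarrow> op_le M (\<lambda>x A. - T x A) R \<longrightarrow> op_le M S R)"

definition Omega :: "real set" where
  "Omega = {0} \<union> {1 / real n | n. n \<ge> 1} \<union> {- 1 / real n | n. n \<ge> 1}"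

definition OmegaM :: "real measure" where
  "OmegaM = restrict_space borel Omega"

end

theory Submission
  imports Defs
begin



definition tp :: "real \<Rightarrow> 'a \<Rightarrow> real \<Rightarrow> 'a \<Rightarrow> 'a set \<Rightarrow> real" where
  "tp c a e b = (\<lambda>A. c * indicator A a + e * indicator A b)"

lemma dirac_sums:
  assumes "disjoint_family A"
  shows "(\<lambda>i. indicator (A i) a :: real) sums indicator (\<Union>i. A i) a"
proof (cases "a \<in> (\<Union>i. A i)")
  case True
  then obtain j where j: "a \<in> A j" by blast
  have eq: "indicator (A i) a = (if i = j then 1 else (0::real))" for i
  proof (cases "i = j")
    case True then show ?thesis using j by simp
  next
    case False
    then have "A i \<inter> A j = {}" using assms unfolding disjoint_family_on_def by blast
    then have "a \<notin> A i" using j by blast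
    then show ?thesis using False by simp
  qed
  have "(\<lambda>i::nat. if i = j then 1 else (0::real)) sums 1"
    using sums_single[of j "\<lambda>_. 1::real"] by simp
  moreover have "indicator (\<Union>i. A i) a = (1::real)" using True by simp
  ultimately show ?thesis unfolding eq by simp
next
  case False
  then have "\<And>i. a \<notin> A i" by blast
  then have "(\<lambda>i. indicator (A i) a :: real) = (\<lambda>i. 0)" by (simp add: fun_eq_iff)
  then show ?thesis using False by simp
qed

lemma tp_signed: "signed_measure M (tp c a e b)"
  unfolding signed_measure_def
proof (intro conjI allI impI)
  show "tp c a e b {} = 0" by (simp add: tp_def)
  fix A :: "nat \<Rightarrow> _" assume "range A \<subseteq> sets M" and d: "disjoint_family A"
  have s1: "(\<lambda>i. indicator (A i) a :: real) sums indicator (\<Union>i. A i) a" by (rule dirac_sums[OF d])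
  have s2: "(\<lambda>i. indicator (A i) b :: real) sums indicator (\<Union>i. A i) b" by (rule dirac_sums[OF d])
  have "(\<lambda>i. c * indicator (A i) a + e * indicator (A i) b) sums
      (c * indicator (\<Union>i. A i) a + e * indicator (\<Union>i. A i) b)"
    by (rule sums_add[OF sums_mult[OF s1] sums_mult[OF s2]])
  then show "(\<lambda>i. tp c a e b (A i)) sums tp c a e b (\<Union>i. A i)" by (simp add: tp_def)
qed

lemma tp_positive: "c \<ge> 0 \<Longrightarrow> e \<ge> 0 \<Longrightarrow> positive_measure M (tp c a e b)"
  unfolding positive_measure_def
proof (intro conjI ballI)
  show "signed_measure M (tp c a e b)" by (rule tp_signed)
  fix A assume "c \<ge> 0" "e \<ge> 0" then show "0 \<le> tp c a e b A" by (simp add: tp_def)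
qed

lemma sm_cong:
  assumes "signed_measure M \<mu>" "\<And>A. A \<in> sets M \<Longrightarrow> \<nu> A = \<mu> A"
  shows "signed_measure M \<nu>"
  unfolding signed_measure_def
proof (intro conjI allI impI)
  show "\<nu> {} = 0" using assms unfolding signed_measure_def by simp
  fix A :: "nat \<Rightarrow> _" assume A: "range A \<subseteq> sets M" "disjoint_family A"
  then have "(\<lambda>i. \<mu> (A i)) sums \<mu> (\<Union>i. A i)" using assms(1) unfolding signed_measure_def by blast
  moreover have "(\<Union>i. A i) \<in> sets M" using A by auto
  ultimately show "(\<lambda>i. \<nu> (A i)) sums \<nu> (\<Union>i. A i)" using A assms(2) by auto
qed

lemma pm_cong:
  assumes "positive_measure M \<mu>" "\<And>A. A \<in> sets M \<Longrightarrow> \<nu> A = \<mu> A"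
  shows "positive_measure M \<nu>"
  unfolding positive_measure_def
proof (intro conjI ballI)
  show "signed_measure M \<nu>"
    by (rule sm_cong[OF _ assms(2)]) (use assms(1) in \<open>simp add: positive_measure_def\<close>)
  fix A assume "A \<in> sets M" then show "0 \<le> \<nu> A" using assms unfolding positive_measure_def by simp
qed

lemma sm_add2:
  assumes sm: "signed_measure M \<mu>" and AB: "A \<in> sets M" "B \<in> sets M" "A \<inter> B = {}"
  shows "\<mu> (A \<union> B) = \<mu> A + \<mu> B"
proof -
  define F where "F = (\<lambda>i::nat. if i = 0 then A else if i = 1 then B else {})"
  have r: "range F \<subseteq> sets M" using AB by (auto simp: F_def)
  have d: "disjoint_family F" using AB unfolding disjoint_family_on_def F_def by auto
  have u: "(\<Union>i. F i) = A \<union> B"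
  proof
    show "(\<Union>i. F i) \<subseteq> A \<union> B" by (auto simp: F_def split: if_splits)
    show "A \<union> B \<subseteq> (\<Union>i. F i)"
    proof
      fix x assume "x \<in> A \<union> B"
      then show "x \<in> (\<Union>i. F i)"
      proof
        assume "x \<in> A" then show ?thesis by (intro UN_I[of 0]) (auto simp: F_def)
      next
        assume "x \<in> B" then show ?thesis by (intro UN_I[of 1]) (auto simp: F_def)
      qed
    qed
  qed
  have e: "\<mu> {} = 0" using sm unfolding signed_measure_def by simp
  have "(\<lambda>i. \<mu> (F i)) sums \<mu> (\<Union>i. F i)" using sm r d unfolding signed_measure_def by blast
  then have s1: "(\<lambda>i. \<mu> (F i)) sums \<mu> (A \<union> B)" by (simp only: u)
  have "(\<lambda>i. \<mu> (F i)) sums (\<Sum>i\<in>{0,1}. \<mu> (F i))"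
    by (rule sums_finite) (auto simp: F_def e)
  then have "(\<lambda>i. \<mu> (F i)) sums (\<mu> A + \<mu> B)" by (simp add: F_def)
  with s1 show ?thesis using sums_unique2 by blast
qed

lemma sm_finadd:
  assumes sm: "signed_measure M \<mu>"
  shows "finite P \<Longrightarrow> P \<subseteq> sets M \<Longrightarrow> disjoint P \<Longrightarrow> sum \<mu> P = \<mu> (\<Union>P)"
proof (induction P rule: finite_induct)
  case empty
  then show ?case using sm unfolding signed_measure_def by simp
next
  case (insert B P)
  have dP: "disjoint P" using insert.prems(2) by (simp add: pairwise_insert)
  have PS: "P \<subseteq> sets M" and BS: "B \<in> sets M" using insert.prems(1) by simp_all
  have IH: "sum \<mu> P = \<mu> (\<Union>P)" by (rule insert.IH[OF PS dP])
  have "\<forall>y\<in>P. disjnt B y" using insert.prems(2) insert.hyps(2) unfolding pairwise_insert by auto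
  then have dj: "B \<inter> \<Union>P = {}" unfolding disjnt_def by blast
  have US: "\<Union>P \<in> sets M" by (rule sets.finite_Union[OF insert.hyps(1) PS])
  have "\<mu> (B \<union> \<Union>P) = \<mu> B + \<mu> (\<Union>P)" by (rule sm_add2[OF sm BS US dj])
  moreover have "sum \<mu> (insert B P) = \<mu> B + sum \<mu> P" by (rule sum.insert[OF insert.hyps])
  ultimately show ?case using IH by simp
qed

lemma tv_sum_le:
  assumes nu: "positive_measure M \<nu>" and bd: "\<And>B. B \<in> sets M \<Longrightarrow> \<bar>\<mu> B\<bar> \<le> \<nu> B"
    and P: "finite P" "P \<subseteq> sets M" "disjoint P" "\<Union>P = A"
  shows "(\<Sum>B\<in>P. \<bar>\<mu> B\<bar>) \<le> \<nu> A"
proof -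
  have sm: "signed_measure M \<nu>" using nu unfolding positive_measure_def by blast
  have "(\<Sum>B\<in>P. \<bar>\<mu> B\<bar>) \<le> (\<Sum>B\<in>P. \<nu> B)"
  proof (rule sum_mono)
    fix B assume "B \<in> P" then show "\<bar>\<mu> B\<bar> \<le> \<nu> B" using P(2) bd by blast
  qed
  also have "\<dots> = \<nu> (\<Union>P)" by (rule sm_finadd[OF sm P(1) P(2) P(3)])
  finally show ?thesis using P(4) by simp
qed

definition tvset :: "'a measure \<Rightarrow> ('a set \<Rightarrow> real) \<Rightarrow> 'a set \<Rightarrow> real set" where
  "tvset M \<mu> A = {(\<Sum>B\<in>P. \<bar>\<mu> B\<bar>) | P. finite P \<and> P \<subseteq> sets M \<and> disjoint P \<and> \<Union>P = A}"

lemma tv_eq: "tv M \<mu> A = Sup (tvset M \<mu> A)"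
  unfolding tv_def tvset_def ..

lemma tvsetI: "finite P \<Longrightarrow> P \<subseteq> sets M \<Longrightarrow> disjoint P \<Longrightarrow> \<Union>P = A \<Longrightarrow>
   (\<Sum>B\<in>P. \<bar>\<mu> B\<bar>) \<in> tvset M \<mu> A"
  unfolding tvset_def by blast

lemma tvsetE: "x \<in> tvset M \<mu> A \<Longrightarrow> (\<And>P. x = (\<Sum>B\<in>P. \<bar>\<mu> B\<bar>) \<Longrightarrow> finite P \<Longrightarrow> P \<subseteq> sets M \<Longrightarrow> disjoint P \<Longrightarrow> \<Union>P = A \<Longrightarrow> thesis) \<Longrightarrow> thesis"
  unfolding tvset_def by blast

lemma tv_set_ne: "A \<in> sets M \<Longrightarrow> tvset M \<mu> A \<noteq> {}"
proof -
  assume A: "A \<in> sets M"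
  have "disjoint {A}" by simp
  then have "(\<Sum>B\<in>{A}. \<bar>\<mu> B\<bar>) \<in> tvset M \<mu> A" using A by (intro tvsetI) auto
  then show ?thesis by blast
qed

lemma tv_le:
  assumes nu: "positive_measure M \<nu>" and bd: "\<And>B. B \<in> sets M \<Longrightarrow> \<bar>\<mu> B\<bar> \<le> \<nu> B"
    and A: "A \<in> sets M"
  shows "tv M \<mu> A \<le> \<nu> A"
  unfolding tv_eq
proof (rule cSup_least)
  show "tvset M \<mu> A \<noteq> {}" by (rule tv_set_ne[OF A])
  fix x assume "x \<in> tvset M \<mu> A"
  then show "x \<le> \<nu> A"
  proof (rule tvsetE)
    fix P assume "x = (\<Sum>B\<in>P. \<bar>\<mu> B\<bar>)" "finite P" "P \<subseteq> sets M" "disjoint P" "\<Union>P = A"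
    then show "x \<le> \<nu> A" using tv_sum_le[OF nu bd, of P A] by simp
  qed
qed

lemma tv_ge:
  assumes nu: "positive_measure M \<nu>" and bd: "\<And>B. B \<in> sets M \<Longrightarrow> \<bar>\<mu> B\<bar> \<le> \<nu> B"
    and P: "finite P" "P \<subseteq> sets M" "disjoint P" "\<Union>P = A"
  shows "(\<Sum>B\<in>P. \<bar>\<mu> B\<bar>) \<le> tv M \<mu> A"
  unfolding tv_eq
proof (rule cSup_upper)
  show "(\<Sum>B\<in>P. \<bar>\<mu> B\<bar>) \<in> tvset M \<mu> A" by (rule tvsetI[OF P])
  show "bdd_above (tvset M \<mu> A)"
  proof (rule bdd_aboveI)
    fix x assume "x \<in> tvset M \<mu> A"
    then show "x \<le> \<nu> A"
    proof (rule tvsetE)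
      fix P assume "x = (\<Sum>B\<in>P. \<bar>\<mu> B\<bar>)" "finite P" "P \<subseteq> sets M" "disjoint P" "\<Union>P = A"
      then show "x \<le> \<nu> A" using tv_sum_le[OF nu bd, of P A] by simp
    qed
  qed
qed

lemma pos_tv:
  assumes mu: "positive_measure M \<mu>" and A: "A \<in> sets M"
  shows "tv M \<mu> A = \<mu> A"
proof (rule antisym)
  have bd: "\<And>B. B \<in> sets M \<Longrightarrow> \<bar>\<mu> B\<bar> \<le> \<mu> B" using mu unfolding positive_measure_def by auto
  show "tv M \<mu> A \<le> \<mu> A" by (rule tv_le[OF mu bd A])
  have "(\<Sum>B\<in>{A}. \<bar>\<mu> B\<bar>) \<le> tv M \<mu> A" by (rule tv_ge[OF mu bd]) (use A in auto)
  then show "\<mu> A \<le> tv M \<mu> A" using bd[OF A] by simp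
qed

lemma tv_cong:
  assumes "\<And>A. A \<in> sets M \<Longrightarrow> \<mu> A = \<nu> A"
  shows "tv M \<mu> = tv M \<nu>"
proof
  fix A
  have "\<And>P. P \<subseteq> sets M \<Longrightarrow> (\<Sum>B\<in>P. \<bar>\<mu> B\<bar>) = (\<Sum>B\<in>P. \<bar>\<nu> B\<bar>)"
    using assms by (intro sum.cong) auto
  then have "tvset M \<mu> A = tvset M \<nu> A" unfolding tvset_def by metis
  then show "tv M \<mu> A = tv M \<nu> A" unfolding tv_eq by simp
qed

lemma mof_cong:
  assumes "\<And>A. A \<in> sets M \<Longrightarrow> F A = G A"
  shows "measure_of (space M) (sets M) F = measure_of (space M) (sets M) G"
proof (rule measure_of_eq)
  show "sets M \<subseteq> Pow (space M)" by (rule sets.space_closed)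
  fix a assume "a \<in> sigma_sets (space M) (sets M)"
  then have "a \<in> sets M" by (simp only: sets.sigma_sets_eq)
  then show "F a = G a" by (rule assms)
qed

lemma sint_cong:
  assumes "\<And>A. A \<in> sets M \<Longrightarrow> \<mu> A = \<nu> A"
  shows "sintegral M \<mu> f = sintegral M \<nu> f"
proof -
  have t: "tv M \<mu> = tv M \<nu>" by (rule tv_cong[OF assms])
  have "pos_part M \<mu> = pos_part M \<nu>" unfolding pos_part_def t
    by (rule mof_cong) (use assms in auto)
  moreover have "neg_part M \<mu> = neg_part M \<nu>" unfolding neg_part_def t
    by (rule mof_cong) (use assms in auto)
  ultimately show ?thesis unfolding sintegral_def by simp
qed

lemma ms_pos:
  assumes mu: "positive_measure M \<mu>"
  shows "measure_space (space M) (sets M) (\<lambda>A. ennreal (\<mu> A))"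
  unfolding measure_space_def
proof (intro conjI)
  show "sigma_algebra (space M) (sets M)" by (rule sets.sigma_algebra_axioms)
  show "positive (sets M) (\<lambda>A. ennreal (\<mu> A))"
    using mu unfolding positive_def positive_measure_def signed_measure_def by simp
  show "countably_additive (sets M) (\<lambda>A. ennreal (\<mu> A))"
    unfolding countably_additive_def
  proof (intro allI impI)
    fix A :: "nat \<Rightarrow> _" assume A: "range A \<subseteq> sets M" "disjoint_family A" "\<Union> (range A) \<in> sets M"
    then have s: "(\<lambda>i. \<mu> (A i)) sums \<mu> (\<Union>i. A i)"
      using mu unfolding positive_measure_def signed_measure_def by blast
    have nn: "\<And>i. 0 \<le> \<mu> (A i)" using mu A unfolding positive_measure_def by auto
    have "(\<Sum>i. ennreal (\<mu> (A i))) = ennreal (\<Sum>i. \<mu> (A i))"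
      using s nn by (intro suminf_ennreal2) (auto simp: sums_iff)
    then show "(\<Sum>i. ennreal (\<mu> (A i))) = ennreal (\<mu> (\<Union> (range A)))"
      using s by (simp add: sums_iff)
  qed
qed

lemma emeasure_pos:
  assumes mu: "positive_measure M \<mu>" and A: "A \<in> sets M"
  shows "emeasure (measure_of (space M) (sets M) (\<lambda>A. ennreal (\<mu> A))) A = ennreal (\<mu> A)"
  using ms_pos[OF mu] A by (intro emeasure_measure_of_sigma) (auto simp: measure_space_def)

lemma sets_mof[simp]: "sets (measure_of (space M) (sets M) F) = sets M"
  by (rule sigma_algebra.sets_measure_of_eq[OF sets.sigma_algebra_axioms])

lemma space_mof[simp]: "space (measure_of (space M) (sets M) F) = space M"
  by (rule space_measure_of_conv)

lemma sint_pos: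
  assumes mu: "positive_measure M \<mu>"
  shows "sintegral M \<mu> f = integral\<^sup>L (measure_of (space M) (sets M) (\<lambda>A. ennreal (\<mu> A))) f"
proof -
  have t: "\<And>A. A \<in> sets M \<Longrightarrow> tv M \<mu> A = \<mu> A" using pos_tv[OF mu] by simp
  have "pos_part M \<mu> = measure_of (space M) (sets M) (\<lambda>A. ennreal (\<mu> A))" unfolding pos_part_def
    by (rule mof_cong) (use t in auto)
  moreover have "neg_part M \<mu> = null_measure M" unfolding neg_part_def null_measure_def
    by (rule mof_cong) (use t in auto)
  ultimately show ?thesis unfolding sintegral_def by simp
qed

lemma meas_Pow: "sets N = Pow (space N) \<Longrightarrow> f \<in> borel_measurable N"
  by (rule measurableI) auto




lemma int_tp:
  assumes P: "sets M = Pow (space M)" and ab: "a \<in> space M" "b \<in> space M" and ce: "c \<ge> 0" "e \<ge> 0"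
  shows "integral\<^sup>L (measure_of (space M) (sets M) (\<lambda>A. ennreal (tp c a e b A))) f = c * f a + e * f b"
proof -
  let ?N = "measure_of (space M) (sets M) (\<lambda>A. ennreal (tp c a e b A))"
  have pm: "positive_measure M (tp c a e b)" by (rule tp_positive[OF ce])
  have sN: "sets ?N = Pow (space M)" by (subst sets_mof) (rule P)
  have spN: "space ?N = space M" by (rule space_mof)
  have em: "emeasure ?N A = ennreal (tp c a e b A)" if "A \<subseteq> space M" for A
    by (rule emeasure_pos[OF pm]) (use that P in blast)
  have tnn: "tp c a e b A \<ge> 0" for A using ce by (simp add: tp_def)
  have ms: "measure ?N A = tp c a e b A" if "A \<subseteq> space M" for A
    unfolding measure_def using em[OF that] tnn[of A] by simp
  define g where "g = (\<lambda>x. f a * indicator {a} x + f b * indicator ({b} - {a}) x)"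
  have ae: "AE x in ?N. f x = g x"
  proof (rule AE_I')
    have "emeasure ?N (space M - {a,b}) = 0" using em[of "space M - {a,b}"] by (simp add: tp_def)
    moreover have "space M - {a,b} \<in> sets ?N" unfolding sN by auto
    ultimately show "space M - {a,b} \<in> null_sets ?N" by (rule null_setsI)
    show "{x \<in> space ?N. f x \<noteq> g x} \<subseteq> space M - {a,b}" unfolding spN by (cases "a = b") (auto simp: g_def)
  qed
  have i1: "{a} \<inter> space M = {a}" using ab by auto
  have i2: "({b} - {a}) \<inter> space M = {b} - {a}" using ab by auto
  have ea: "emeasure ?N {a} = ennreal (tp c a e b {a})" by (rule em) (use ab in auto)
  have eb: "emeasure ?N ({b} - {a}) = ennreal (tp c a e b ({b} - {a}))" by (rule em) (use ab in auto)
  have ia: "integrable ?N (indicator {a} :: _ \<Rightarrow> real)"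
    unfolding integrable_indicator_iff spN sN i1 ea using ab by simp
  have ib: "integrable ?N (indicator ({b} - {a}) :: _ \<Rightarrow> real)"
    unfolding integrable_indicator_iff spN sN i2 eb using ab by auto
  have mN: "h \<in> borel_measurable ?N" for h :: "_ \<Rightarrow> real"
    by (rule meas_Pow) (simp only: sN spN)
  have "integral\<^sup>L ?N f = integral\<^sup>L ?N g"
    by (rule integral_cong_AE[OF mN mN ae])
  also have "\<dots> = f a * measure ?N ({a} \<inter> space M) + f b * measure ?N (({b} - {a}) \<inter> space M)"
    unfolding g_def using ia ib by (simp add: spN)
  also have "({a} \<inter> space M) = {a}" using ab by auto
  also have "(({b} - {a}) \<inter> space M) = {b} - {a}" using ab by auto
  also have "f a * measure ?N {a} + f b * measure ?N ({b} - {a}) = c * f a + e * f b"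
  proof -
    have ma: "measure ?N {a} = tp c a e b {a}" by (rule ms) (use ab in auto)
    have mb: "measure ?N ({b} - {a}) = tp c a e b ({b} - {a})" by (rule ms) (use ab in auto)
    show ?thesis unfolding ma mb by (cases "a = b") (auto simp: tp_def algebra_simps)
  qed
  finally show ?thesis .
qed

lemma sint_tp:
  assumes P: "sets M = Pow (space M)" and ab: "a \<in> space M" "b \<in> space M" and ce: "c \<ge> 0" "e \<ge> 0"
    and eq: "\<And>A. A \<in> sets M \<Longrightarrow> \<mu> A = tp c a e b A"
  shows "sintegral M \<mu> f = c * f a + e * f b"
proof -
  have pm: "positive_measure M \<mu>" by (rule pm_cong[OF tp_positive[OF ce] eq])
  have "sintegral M \<mu> f = integral\<^sup>L (measure_of (space M) (sets M) (\<lambda>A. ennreal (\<mu> A))) f"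
    by (rule sint_pos[OF pm])
  also have "measure_of (space M) (sets M) (\<lambda>A. ennreal (\<mu> A)) =
      measure_of (space M) (sets M) (\<lambda>A. ennreal (tp c a e b A))"
    by (rule mof_cong) (simp add: eq)
  finally show ?thesis using int_tp[OF P ab ce] by simp
qed

lemma pos_tp:
  assumes ce: "c \<ge> 0" "e \<ge> 0" and eq: "\<And>A. A \<in> sets M \<Longrightarrow> \<mu> A = tp c a e b A"
  shows "positive_measure M \<mu>"
  by (rule pm_cong[OF tp_positive[OF ce] eq])

lemma tv_diff:
  assumes P: "sets M = Pow (space M)" and ab: "a \<in> space M" "b \<in> space M" "a \<noteq> b"
    and A: "A \<in> sets M"
  shows "tv M (tp 1 a (-1) b) A = tp 1 a 1 b A"
proof (rule antisym)
  have nu: "positive_measure M (tp 1 a 1 b)" by (rule tp_positive) auto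
  have bd: "\<And>B. B \<in> sets M \<Longrightarrow> \<bar>tp 1 a (-1) b B\<bar> \<le> tp 1 a 1 b B"
    by (auto simp: tp_def indicator_def)
  show "tv M (tp 1 a (-1) b) A \<le> tp 1 a 1 b A" by (rule tv_le[OF nu bd A])
  show "tp 1 a 1 b A \<le> tv M (tp 1 a (-1) b) A"
  proof (cases "a \<in> A")
    case True
    have AS: "A \<subseteq> space M" using A P by auto
    have d: "disjoint {{a}, A - {a}}" by (auto simp: pairwise_def disjnt_def)
    have ne: "{a} \<noteq> A - {a}" by auto
    have "(\<Sum>B\<in>{{a}, A - {a}}. \<bar>tp 1 a (-1) b B\<bar>) \<le> tv M (tp 1 a (-1) b) A"
      by (rule tv_ge[OF nu bd]) (use True AS P ab d in auto)
    moreover have "(\<Sum>B\<in>{{a}, A - {a}}. \<bar>tp 1 a (-1) b B\<bar>) = tp 1 a 1 b A"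
      using ne True ab by (simp add: tp_def indicator_def)
    ultimately show ?thesis by simp
  next
    case False
    have d: "disjoint {A}" by simp
    have "(\<Sum>B\<in>{A}. \<bar>tp 1 a (-1) b B\<bar>) \<le> tv M (tp 1 a (-1) b) A"
      by (rule tv_ge[OF nu bd]) (use A d in auto)
    moreover have "(\<Sum>B\<in>{A}. \<bar>tp 1 a (-1) b B\<bar>) = tp 1 a 1 b A"
      using False by (simp add: tp_def indicator_def)
    ultimately show ?thesis by simp
  qed
qed

lemma tp_same: "tp 1 a (-1) a = tp 0 a 0 a"
  by (auto simp: tp_def)

lemma sint_diff:
  assumes P: "sets M = Pow (space M)" and ab: "a \<in> space M" "b \<in> space M"
  shows "sintegral M (tp 1 a (-1) b) f = f a - f b"
proof (cases "a = b")
  case True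
  have e: "tp 1 a (-1) b = tp 0 a 0 a" unfolding True by (rule tp_same)
  show ?thesis unfolding e using sint_tp[OF P ab(1) ab(1), of 0 0 "tp 0 a 0 a" f] True by simp
next
  case False
  have t: "\<And>A. A \<in> sets M \<Longrightarrow> tv M (tp 1 a (-1) b) A = tp 1 a 1 b A"
    using tv_diff[OF P ab False] by simp
  have pp: "pos_part M (tp 1 a (-1) b) = measure_of (space M) (sets M) (\<lambda>A. ennreal (tp 1 a 0 a A))"
    unfolding pos_part_def by (rule mof_cong) (use t in \<open>simp add: tp_def\<close>)
  have np: "neg_part M (tp 1 a (-1) b) = measure_of (space M) (sets M) (\<lambda>A. ennreal (tp 1 b 0 b A))"
    unfolding neg_part_def by (rule mof_cong) (use t in \<open>simp add: tp_def\<close>)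
  show ?thesis unfolding sintegral_def pp np
    using int_tp[OF P ab(1) ab(1), of 1 0 f] int_tp[OF P ab(2) ab(2), of 1 0 f] by simp
qed

lemma kop_dirac:
  assumes P: "sets M = Pow (space M)" and y: "y \<in> space M"
  shows "kop M g (tp 1 y 0 y) A = g y A"
  unfolding kop_def using sint_tp[OF P y y, of 1 0 "tp 1 y 0 y"] by simp

lemma ople_pt:
  assumes P: "sets M = Pow (space M)" and le: "op_le M g1 g2" and y: "y \<in> space M" and A: "A \<in> sets M"
  shows "g1 y A \<le> g2 y A"
proof -
  have "positive_measure M (tp 1 y 0 y)" by (rule tp_positive) auto
  then have "kop M g1 (tp 1 y 0 y) A \<le> kop M g2 (tp 1 y 0 y) A" using le A unfolding op_le_def by blast
  then show ?thesis using kop_dirac[OF P y] by simp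
qed

lemma ople_I:
  assumes P: "sets M = Pow (space M)"
    and le: "\<And>x A. x \<in> space M \<Longrightarrow> A \<in> sets M \<Longrightarrow> g1 x A \<le> g2 x A"
    and b1: "\<And>x A. x \<in> space M \<Longrightarrow> A \<in> sets M \<Longrightarrow> \<bar>g1 x A\<bar> \<le> C"
    and b2: "\<And>x A. x \<in> space M \<Longrightarrow> A \<in> sets M \<Longrightarrow> \<bar>g2 x A\<bar> \<le> C"
  shows "op_le M g1 g2"
  unfolding op_le_def
proof (intro allI impI ballI)
  fix \<mu> A assume mu: "positive_measure M \<mu>" and A: "A \<in> sets M"
  let ?N = "measure_of (space M) (sets M) (\<lambda>A. ennreal (\<mu> A))"
  have sN: "sets ?N = Pow (space ?N)" by (subst sets_mof, subst space_mof) (rule P)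
  have spN: "space ?N = space M" by (rule space_mof)
  have fin: "finite_measure ?N"
    by (rule finite_measureI) (simp add: spN emeasure_pos[OF mu sets.top] infinity_ennreal_def)
  have ae1: "AE x in ?N. norm (g1 x A) \<le> C" by (rule AE_I2) (use b1 A in \<open>simp add: spN\<close>)
  have ae2: "AE x in ?N. norm (g2 x A) \<le> C" by (rule AE_I2) (use b2 A in \<open>simp add: spN\<close>)
  have i1: "integrable ?N (\<lambda>x. g1 x A)"
    by (rule finite_measure.integrable_const_bound[OF fin ae1 meas_Pow[OF sN]])
  have i2: "integrable ?N (\<lambda>x. g2 x A)"
    by (rule finite_measure.integrable_const_bound[OF fin ae2 meas_Pow[OF sN]])
  have "integral\<^sup>L ?N (\<lambda>x. g1 x A) \<le> integral\<^sup>L ?N (\<lambda>x. g2 x A)"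
    by (rule integral_mono[OF i1 i2]) (use le A in \<open>simp add: spN\<close>)
  then show "kop M g1 \<mu> A \<le> kop M g2 \<mu> A" unfolding kop_def sint_pos[OF mu] .
qed

lemma cont_lim:
  assumes "continuous_on S g" "\<And>n. s n \<in> S" "s \<longlonglongrightarrow> l" "l \<in> S"
  shows "(\<lambda>n. g (s n)) \<longlonglongrightarrow> g l"
  by (rule continuous_on_tendsto_compose[OF assms(1) assms(3) assms(4)]) (use assms(2) in auto)

lemma Cb_const: "(\<lambda>_. c) \<in> Cb S"
  unfolding Cb_def by (auto intro!: exI[of _ "\<bar>c\<bar>"])




lemma Omega_countable: "countable Omega"
proof -
  have eq: "Omega = {0} \<union> (\<lambda>n. 1 / real n) ` {n. n \<ge> 1} \<union> (\<lambda>n. - 1 / real n) ` {n. n \<ge> 1}"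
    unfolding Omega_def by auto
  show ?thesis unfolding eq by (intro countable_Un countable_image) auto
qed

lemma space_OmegaM[simp]: "space OmegaM = Omega"
  unfolding OmegaM_def by (simp add: space_restrict_space)

lemma sets_OmegaM[simp]: "sets OmegaM = Pow Omega"
proof -
  have *: "B \<in> sets borel" if "B \<subseteq> Omega" for B :: "real set"
  proof -
    have "countable B" using that Omega_countable countable_subset by blast
    then show ?thesis by (rule sets.countable[rotated]) (auto intro: borel_closed)
  qed
  show ?thesis unfolding OmegaM_def sets_restrict_space
  proof (intro equalityI subsetI)
    fix X assume "X \<in> (\<inter>) Omega ` sets borel" then show "X \<in> Pow Omega" by auto
  next
    fix X assume X: "X \<in> Pow Omega" then have "X = Omega \<inter> X" "X \<in> sets borel" using * by auto
    then show "X \<in> (\<inter>) Omega ` sets borel" by blast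
  qed
qed

lemma PM: "sets OmegaM = Pow (space OmegaM)" by simp

lemma Omega_iff: "x \<in> Omega \<longleftrightarrow> x = 0 \<or> (\<exists>n. x = 1 / real n \<and> n \<ge> 1) \<or> (\<exists>n. x = - 1 / real n \<and> n \<ge> 1)"
  unfolding Omega_def by (simp only: Un_iff singleton_iff mem_Collect_eq disj_assoc)

lemma Omega_zero[simp]: "0 \<in> Omega" unfolding Omega_iff by (rule disjI1) (rule refl)

lemma Omega_uminus:
  assumes "x \<in> Omega" shows "- x \<in> Omega"
proof -
  have "x = 0 \<or> (\<exists>n. x = 1 / real n \<and> n \<ge> 1) \<or> (\<exists>n. x = - 1 / real n \<and> n \<ge> 1)"
    using assms unfolding Omega_iff .
  then show ?thesis
  proof (elim disjE exE conjE)
    assume "x = 0" then show ?thesis by simp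
  next
    fix n :: nat assume h: "x = 1 / real n" "n \<ge> 1"
    have "- x = - 1 / real n" using h by simp
    then show ?thesis unfolding Omega_iff
      by (intro disjI2 disjI1 exI[of _ n] conjI) (use h in simp_all)
  next
    fix n :: nat assume h: "x = - 1 / real n" "n \<ge> 1"
    have "- x = 1 / real n" using h by simp
    then show ?thesis unfolding Omega_iff
      by (intro disjI2 disjI1 exI[of _ n] conjI) (use h in simp_all)
  qed
qed

lemma Omega_abs: "x \<in> Omega \<Longrightarrow> \<bar>x\<bar> \<in> Omega"
  using Omega_uminus[of x] by (cases "x \<ge> 0") (simp_all add: abs_if)

lemma Omega_max: "x \<in> Omega \<Longrightarrow> max x 0 \<in> Omega"
  by (cases "x \<ge> 0") (simp_all add: max_def)

lemma Omega_pos: "inverse (real (Suc n)) \<in> Omega"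
proof -
  have "inverse (real (Suc n)) = 1 / real (Suc n)" by (simp add: inverse_eq_divide)
  then show ?thesis unfolding Omega_iff
    by (intro disjI2 disjI1 exI[of _ "Suc n"] conjI) simp_all
qed

lemma Omega_neg: "- inverse (real (Suc n)) \<in> Omega"
  using Omega_uminus[OF Omega_pos] .

definition k0 :: "real \<Rightarrow> real set \<Rightarrow> real" where
  "k0 x = tp 1 (max x 0) (-1) (- max x 0)"

definition ak :: "real \<Rightarrow> real set \<Rightarrow> real" where
  "ak x = (if x > 0 then tp 1 x 1 (-x) else tp 0 0 0 0)"

definition Ra :: "real \<Rightarrow> real set \<Rightarrow> real" where
  "Ra x = tp 1 \<bar>x\<bar> 1 (-x)"

definition Rb :: "real \<Rightarrow> real set \<Rightarrow> real" where
  "Rb x = tp 1 x 1 (- \<bar>x\<bar>)"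

lemma ak_pos: "positive_measure M (ak x)"
  unfolding ak_def by (auto intro: tp_positive)

lemma ak_le2: "ak x A \<le> 2"
  unfolding ak_def tp_def by (auto simp: indicator_def)

lemma tv_k0:
  assumes x: "x \<in> Omega" and A: "A \<subseteq> Omega"
  shows "tv OmegaM (k0 x) A = ak x A"
proof (cases "x > 0")
  case True
  have "tv OmegaM (tp 1 x (-1) (-x)) A = tp 1 x 1 (-x) A"
    by (rule tv_diff[OF PM]) (use True x A Omega_uminus in auto)
  then show ?thesis using True by (simp add: k0_def ak_def)
next
  case False
  then have "k0 x = tp 0 0 0 0" unfolding k0_def using tp_same[of 0] by simp
  have pm0: "positive_measure OmegaM (tp 0 0 0 (0::real))" by (rule tp_positive) auto
  have "tv OmegaM (tp 0 0 0 0) A = tp 0 0 0 0 A" by (rule pos_tv[OF pm0]) (use A in simp)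
  then show ?thesis using False \<open>k0 x = tp 0 0 0 0\<close> by (simp add: ak_def)
qed

lemma sint_k0:
  assumes x: "x \<in> Omega"
  shows "sintegral OmegaM (k0 x) f = f (max x 0) - f (- max x 0)"
  unfolding k0_def by (rule sint_diff[OF PM]) (use x Omega_max Omega_uminus in auto)

lemma sint_R:
  assumes "a \<in> Omega" "b \<in> Omega"
  shows "sintegral OmegaM (tp 1 a 1 b) f = f a + f b"
  using sint_tp[OF PM, of a b 1 1 "tp 1 a 1 b" f] assms by simp

lemma cont_comp:
  assumes "continuous_on Omega f" "continuous_on Omega h" "\<And>x. x \<in> Omega \<Longrightarrow> h x \<in> Omega"
  shows "continuous_on Omega (\<lambda>x. f (h x))"
  by (rule continuous_on_compose2[OF assms(1) assms(2)]) (use assms(3) in auto)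

lemma k0_bk: "bounded_kernel OmegaM k0"
  unfolding bounded_kernel_def
proof (intro conjI ballI exI[of _ 2])
  fix x show "signed_measure OmegaM (k0 x)" unfolding k0_def by (rule tp_signed)
next
  fix A show "(\<lambda>x. k0 x A) \<in> borel_measurable OmegaM" by (rule meas_Pow[OF PM])
next
  fix x assume "x \<in> space OmegaM"
  then show "tv OmegaM (k0 x) (space OmegaM) \<le> 2" using tv_k0 ak_le2 by simp
qed

lemma k0_cb: "Cb_invariant OmegaM k0"
  unfolding Cb_invariant_def
proof
  fix f assume "f \<in> Cb (space OmegaM)"
  then obtain C where fc: "continuous_on Omega f" and C: "\<And>x. x \<in> Omega \<Longrightarrow> \<bar>f x\<bar> \<le> C"
    unfolding Cb_def by auto
  have eq: "\<And>x. x \<in> Omega \<Longrightarrow> kadj OmegaM k0 f x = f (max x 0) - f (- max x 0)"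
    unfolding kadj_def using sint_k0 by simp
  have c1: "continuous_on Omega (\<lambda>x. f (max x 0))"
    by (rule cont_comp[OF fc]) (auto intro!: continuous_intros Omega_max)
  have c2: "continuous_on Omega (\<lambda>x. f (- max x 0))"
    by (rule cont_comp[OF fc]) (auto intro!: continuous_intros Omega_max Omega_uminus)
  have ceq: "continuous_on Omega (kadj OmegaM k0 f) = continuous_on Omega (\<lambda>x. f (max x 0) - f (- max x 0))"
    by (rule continuous_on_cong) (auto simp: eq)
  have "continuous_on Omega (kadj OmegaM k0 f)"
    using continuous_on_diff[OF c1 c2] ceq by simp
  moreover have "\<forall>x\<in>Omega. \<bar>kadj OmegaM k0 f x\<bar> \<le> 2 * C"
  proof
    fix x assume x: "x \<in> Omega"
    have "\<bar>f (max x 0)\<bar> \<le> C" "\<bar>f (- max x 0)\<bar> \<le> C" using C x Omega_max Omega_uminus by auto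
    moreover have "\<bar>f (max x 0) - f (- max x 0)\<bar> \<le> \<bar>f (max x 0)\<bar> + \<bar>f (- max x 0)\<bar>"
      by (rule abs_triangle_ineq4)
    ultimately show "\<bar>kadj OmegaM k0 f x\<bar> \<le> 2 * C" using eq[OF x] by simp
  qed
  ultimately show "kadj OmegaM k0 f \<in> Cb (space OmegaM)" unfolding Cb_def by auto
qed



lemma abs_bk: "bounded_kernel OmegaM (\<lambda>x A. tv OmegaM (k0 x) A)"
  unfolding bounded_kernel_def
proof (intro conjI ballI exI[of _ 2])
  fix x assume x: "x \<in> space OmegaM"
  show "signed_measure OmegaM (\<lambda>A. tv OmegaM (k0 x) A)"
  proof (rule sm_cong)
    show "signed_measure OmegaM (ak x)" using ak_pos[of OmegaM x] unfolding positive_measure_def by blast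
    fix A assume "A \<in> sets OmegaM" then show "tv OmegaM (k0 x) A = ak x A" using tv_k0 x by simp
  qed
next
  fix A show "(\<lambda>x. tv OmegaM (k0 x) A) \<in> borel_measurable OmegaM" by (rule meas_Pow[OF PM])
next
  fix x assume x: "x \<in> space OmegaM"
  have "tv OmegaM (\<lambda>A. tv OmegaM (k0 x) A) = tv OmegaM (ak x)"
    by (rule tv_cong) (use tv_k0 x in simp)
  moreover have "tv OmegaM (ak x) Omega = ak x Omega" by (rule pos_tv[OF ak_pos]) simp
  ultimately show "tv OmegaM (\<lambda>A. tv OmegaM (k0 x) A) (space OmegaM) \<le> 2" using ak_le2 by simp
qed

lemma sint_abs:
  assumes x: "x \<in> Omega"
  shows "sintegral OmegaM (\<lambda>A. tv OmegaM (k0 x) A) f = (if x > 0 then f x + f (- x) else 0)"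
proof (cases "x > 0")
  case True
  have "sintegral OmegaM (\<lambda>A. tv OmegaM (k0 x) A) f = 1 * f x + 1 * f (- x)"
    by (rule sint_tp[OF PM]) (use x True Omega_uminus tv_k0 in \<open>auto simp: ak_def\<close>)
  then show ?thesis using True by simp
next
  case False
  have "sintegral OmegaM (\<lambda>A. tv OmegaM (k0 x) A) f = 0 * f 0 + 0 * f 0"
    by (rule sint_tp[OF PM]) (use x False tv_k0 in \<open>auto simp: ak_def\<close>)
  then show ?thesis using False by simp
qed

lemma pn_pos: "inverse (real (Suc n)) > 0" by simp

lemma qn_lim: "(\<lambda>n. - inverse (real (Suc n))) \<longlonglongrightarrow> 0"
  using tendsto_minus[OF LIMSEQ_inverse_real_of_nat] by simp

lemma abs_not_cb: "\<not> Cb_invariant OmegaM (\<lambda>x A. tv OmegaM (k0 x) A)"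
proof
  assume "Cb_invariant OmegaM (\<lambda>x A. tv OmegaM (k0 x) A)"
  then have "kadj OmegaM (\<lambda>x A. tv OmegaM (k0 x) A) (\<lambda>_. 1) \<in> Cb Omega"
    using Cb_const[of 1 Omega] unfolding Cb_invariant_def by simp
  then have c: "continuous_on Omega (\<lambda>x. sintegral OmegaM (\<lambda>A. tv OmegaM (k0 x) A) (\<lambda>_. 1))"
    unfolding Cb_def kadj_def by simp
  have "(\<lambda>n. sintegral OmegaM (\<lambda>A. tv OmegaM (k0 (inverse (real (Suc n)))) A) (\<lambda>_. 1))
      \<longlonglongrightarrow> sintegral OmegaM (\<lambda>A. tv OmegaM (k0 0) A) (\<lambda>_. 1)"
    by (rule cont_lim[OF c Omega_pos LIMSEQ_inverse_real_of_nat Omega_zero])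
  moreover have "\<And>n. sintegral OmegaM (\<lambda>A. tv OmegaM (k0 (inverse (real (Suc n)))) A) (\<lambda>_. 1) = 2"
    using sint_abs[OF Omega_pos] by simp
  moreover have "sintegral OmegaM (\<lambda>A. tv OmegaM (k0 0) A) (\<lambda>_. 1) = 0"
    using sint_abs[OF Omega_zero] by simp
  ultimately have "(\<lambda>n. 2::real) \<longlonglongrightarrow> 0" by simp
  then show False using LIMSEQ_unique[OF tendsto_const] by fastforce
qed

lemma tpR_V:
  assumes a: "\<And>x. x \<in> Omega \<Longrightarrow> a x \<in> Omega" "continuous_on Omega a"
    and b: "\<And>x. x \<in> Omega \<Longrightarrow> b x \<in> Omega" "continuous_on Omega b"
  shows "(\<lambda>x. tp 1 (a x) 1 (b x)) \<in> sigma_Cb_ops OmegaM"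
  unfolding sigma_Cb_ops_def
proof (intro CollectI conjI)
  show "bounded_kernel OmegaM (\<lambda>x. tp 1 (a x) 1 (b x))"
    unfolding bounded_kernel_def
  proof (intro conjI ballI exI[of _ 2])
    fix x show "signed_measure OmegaM (tp 1 (a x) 1 (b x))" by (rule tp_signed)
  next
    fix A show "(\<lambda>x. tp 1 (a x) 1 (b x) A) \<in> borel_measurable OmegaM" by (rule meas_Pow[OF PM])
  next
    fix x assume "x \<in> space OmegaM"
    have "tv OmegaM (tp 1 (a x) 1 (b x)) Omega = tp 1 (a x) 1 (b x) Omega"
      by (rule pos_tv) (auto intro: tp_positive)
    then show "tv OmegaM (tp 1 (a x) 1 (b x)) (space OmegaM) \<le> 2"
      by (simp add: tp_def indicator_def)
  qed
  show "Cb_invariant OmegaM (\<lambda>x. tp 1 (a x) 1 (b x))"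
    unfolding Cb_invariant_def
  proof
    fix f assume "f \<in> Cb (space OmegaM)"
    then obtain C where fc: "continuous_on Omega f" and C: "\<And>x. x \<in> Omega \<Longrightarrow> \<bar>f x\<bar> \<le> C"
      unfolding Cb_def by auto
    have eq: "\<And>x. x \<in> Omega \<Longrightarrow> kadj OmegaM (\<lambda>x. tp 1 (a x) 1 (b x)) f x = f (a x) + f (b x)"
      unfolding kadj_def using sint_R a b by simp
    have c1: "continuous_on Omega (\<lambda>x. f (a x))" by (rule cont_comp[OF fc a(2) a(1)])
    have c2: "continuous_on Omega (\<lambda>x. f (b x))" by (rule cont_comp[OF fc b(2) b(1)])
    have ceq: "continuous_on Omega (kadj OmegaM (\<lambda>x. tp 1 (a x) 1 (b x)) f) =
        continuous_on Omega (\<lambda>x. f (a x) + f (b x))"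
      by (rule continuous_on_cong) (auto simp: eq)
    have "continuous_on Omega (kadj OmegaM (\<lambda>x. tp 1 (a x) 1 (b x)) f)"
      using continuous_on_add[OF c1 c2] ceq by simp
    moreover have "\<forall>x\<in>Omega. \<bar>kadj OmegaM (\<lambda>x. tp 1 (a x) 1 (b x)) f x\<bar> \<le> 2 * C"
    proof
      fix x assume x: "x \<in> Omega"
      have "\<bar>f (a x)\<bar> \<le> C" "\<bar>f (b x)\<bar> \<le> C" using C x a b by auto
      then show "\<bar>kadj OmegaM (\<lambda>x. tp 1 (a x) 1 (b x)) f x\<bar> \<le> 2 * C" using eq[OF x] by simp
    qed
    ultimately show "kadj OmegaM (\<lambda>x. tp 1 (a x) 1 (b x)) f \<in> Cb (space OmegaM)"
      unfolding Cb_def by auto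
  qed
qed

lemma Ra_V: "Ra \<in> sigma_Cb_ops OmegaM"
proof -
  have "(\<lambda>x. tp 1 \<bar>x\<bar> 1 (- x)) \<in> sigma_Cb_ops OmegaM"
    by (rule tpR_V) (auto intro!: continuous_intros Omega_abs Omega_uminus)
  moreover have "Ra = (\<lambda>x. tp 1 \<bar>x\<bar> 1 (- x))" by (rule ext) (simp add: Ra_def)
  ultimately show ?thesis by simp
qed

lemma Rb_V: "Rb \<in> sigma_Cb_ops OmegaM"
proof -
  have "(\<lambda>x. tp 1 x 1 (- \<bar>x\<bar>)) \<in> sigma_Cb_ops OmegaM"
    by (rule tpR_V) (auto intro!: continuous_intros Omega_abs Omega_uminus)
  moreover have "Rb = (\<lambda>x. tp 1 x 1 (- \<bar>x\<bar>))" by (rule ext) (simp add: Rb_def)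
  ultimately show ?thesis by simp
qed

lemma k0_eval: "k0 x A = (if x > 0 then indicator A x - indicator A (- x) else 0)"
  by (simp add: k0_def tp_def max_def)

lemma Ra_eval: "Ra x A = indicator A \<bar>x\<bar> + indicator A (- x)"
  by (simp add: Ra_def tp_def)

lemma Rb_eval: "Rb x A = indicator A x + indicator A (- \<bar>x\<bar>)"
  by (simp add: Rb_def tp_def)

lemma ind_cases: "indicator A x = (0::real) \<or> indicator A x = 1"
  by (simp add: indicator_def)

lemma k0_bd: "\<bar>k0 x A\<bar> \<le> 2"
  unfolding k0_eval by (auto simp: indicator_def)

lemma Ra_bd: "\<bar>Ra x A\<bar> \<le> 2"
  unfolding Ra_eval by (auto simp: indicator_def)

lemma Rb_bd: "\<bar>Rb x A\<bar> \<le> 2"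
  unfolding Rb_eval by (auto simp: indicator_def)

lemma nk0_bd: "\<bar>- k0 x A\<bar> \<le> 2"
  using k0_bd by simp

lemma k0_Ra: "op_le OmegaM k0 Ra"
  by (rule ople_I[OF PM, where C=2])
     (auto simp: k0_eval Ra_eval indicator_def intro: k0_bd Ra_bd)

lemma nk0_Ra: "op_le OmegaM (\<lambda>x A. - k0 x A) Ra"
  by (rule ople_I[OF PM, where C=2])
     (auto simp: k0_eval Ra_eval indicator_def intro: nk0_bd Ra_bd)

lemma k0_Rb: "op_le OmegaM k0 Rb"
  by (rule ople_I[OF PM, where C=2])
     (auto simp: k0_eval Rb_eval indicator_def intro: k0_bd Rb_bd)

lemma nk0_Rb: "op_le OmegaM (\<lambda>x A. - k0 x A) Rb"
  by (rule ople_I[OF PM, where C=2])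
     (auto simp: k0_eval Rb_eval indicator_def intro: nk0_bd Rb_bd)

lemma no_mod: "\<not> (\<exists>S. is_modulus_in OmegaM (sigma_Cb_ops OmegaM) k0 S)"
proof
  assume "\<exists>S. is_modulus_in OmegaM (sigma_Cb_ops OmegaM) k0 S"
  then obtain S where m: "is_modulus_in OmegaM (sigma_Cb_ops OmegaM) k0 S" by blast
  have SV: "S \<in> sigma_Cb_ops OmegaM" and l1: "op_le OmegaM k0 S"
    and l2: "op_le OmegaM (\<lambda>x A. - k0 x A) S"
    and least: "\<And>R. R \<in> sigma_Cb_ops OmegaM \<Longrightarrow> op_le OmegaM k0 R \<Longrightarrow>
        op_le OmegaM (\<lambda>x A. - k0 x A) R \<Longrightarrow> op_le OmegaM S R"
    using m unfolding is_modulus_in_def by auto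
  have u1: "op_le OmegaM S Ra" by (rule least[OF Ra_V k0_Ra nk0_Ra])
  have u2: "op_le OmegaM S Rb" by (rule least[OF Rb_V k0_Rb nk0_Rb])
  have bkS: "bounded_kernel OmegaM S" and cbS: "Cb_invariant OmegaM S"
    using SV unfolding sigma_Cb_ops_def by auto
  have sm: "signed_measure OmegaM (S y)" if "y \<in> Omega" for y
    using bkS that unfolding bounded_kernel_def by simp
  have b1: "k0 y B \<le> S y B" if "y \<in> Omega" "B \<subseteq> Omega" for y B
    using ople_pt[OF PM l1, of y B] that by simp
  have b2: "- k0 y B \<le> S y B" if "y \<in> Omega" "B \<subseteq> Omega" for y B
    using ople_pt[OF PM l2, of y B] that by simp
  have b3: "S y B \<le> Ra y B" if "y \<in> Omega" "B \<subseteq> Omega" for y B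
    using ople_pt[OF PM u1, of y B] that by simp
  have b4: "S y B \<le> Rb y B" if "y \<in> Omega" "B \<subseteq> Omega" for y B
    using ople_pt[OF PM u2, of y B] that by simp
  have split: "S y A = S y {z} + S y (A - {z})" if "y \<in> Omega" "A \<subseteq> Omega" "z \<in> A" for y z A
  proof -
    have "S y ({z} \<union> (A - {z})) = S y {z} + S y (A - {z})"
      by (rule sm_add2[OF sm[OF that(1)]]) (use that in auto)
    moreover have "{z} \<union> (A - {z}) = A" using that(3) by auto
    ultimately show ?thesis by simp
  qed
  have Sp: "S y A = tp 1 y 1 (- y) A" if y: "y \<in> Omega" "y > 0" and A: "A \<subseteq> Omega" for y A
  proof -
    have bB: "indicator B y - indicator B (- y) \<le> S y B \<and> indicator B (- y) - indicator B y \<le> S y B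
        \<and> S y B \<le> indicator B y + indicator B (- y)" if "B \<subseteq> Omega" for B
      using b1[OF y(1) that] b2[OF y(1) that] b3[OF y(1) that] y(2)
      by (simp add: k0_eval Ra_eval)
    have ny: "y \<noteq> - y" using y(2) by simp
    show ?thesis
    proof (cases "y \<in> A \<and> - y \<in> A")
      case True
      have s1: "S y {y} = 1" using bB[of "{y}"] y(1) ny by (simp add: indicator_def)
      have AS: "A - {y} \<subseteq> Omega" using A by auto
      have s2: "S y (A - {y}) = 1" using bB[OF AS] A True ny by (simp add: indicator_def)
      show ?thesis using split[OF y(1) A, of y] True s1 s2 by (simp add: tp_def)
    next
      case False
      then show ?thesis using bB[OF A] by (auto simp: tp_def indicator_def)
    qed
  qed
  have Sn: "S y A = tp 0 0 0 0 A" if y: "y \<in> Omega" "y < 0" and A: "A \<subseteq> Omega" for y A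
  proof -
    have bB: "0 \<le> S y B \<and> S y B \<le> 2 * indicator B (- y) \<and> S y B \<le> 2 * indicator B y"
      if "B \<subseteq> Omega" for B
      using b1[OF y(1) that] b3[OF y(1) that] b4[OF y(1) that] y(2)
      by (simp add: k0_eval Ra_eval Rb_eval)
    have ny: "y \<noteq> - y" using y(2) by simp
    show ?thesis
    proof (cases "y \<in> A \<and> - y \<in> A")
      case True
      have s1: "S y {y} = 0" using bB[of "{y}"] y(1) ny by (simp add: indicator_def)
      have AS: "A - {y} \<subseteq> Omega" using A by auto
      have s2: "S y (A - {y}) = 0" using bB[OF AS] A True ny by (simp add: indicator_def)
      show ?thesis using split[OF y(1) A, of y] True s1 s2 by (simp add: tp_def)
    next
      case False
      then show ?thesis using bB[OF A] by (auto simp: tp_def indicator_def)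
    qed
  qed
  have "kadj OmegaM S (\<lambda>_. 1) \<in> Cb Omega"
    using cbS Cb_const[of 1 Omega] unfolding Cb_invariant_def by simp
  then have c: "continuous_on Omega (\<lambda>x. sintegral OmegaM (S x) (\<lambda>_. 1))"
    unfolding Cb_def kadj_def by simp
  have gp: "sintegral OmegaM (S (inverse (real (Suc n)))) (\<lambda>_. 1) = 2" for n
  proof -
    let ?p = "inverse (real (Suc n))"
    have "sintegral OmegaM (S ?p) (\<lambda>_. 1) = 1 * 1 + 1 * 1"
      by (rule sint_tp[OF PM]) (use Sp[OF Omega_pos pn_pos] Omega_pos Omega_neg in auto)
    then show ?thesis by simp
  qed
  have gq: "sintegral OmegaM (S (- inverse (real (Suc n)))) (\<lambda>_. 1) = 0" for n
  proof -
    let ?q = "- inverse (real (Suc n))"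
    have "?q < 0" by simp
    have "sintegral OmegaM (S ?q) (\<lambda>_. 1) = 0 * 1 + 0 * 1"
      by (rule sint_tp[OF PM]) (use Sn[OF Omega_neg \<open>?q < 0\<close>] in auto)
    then show ?thesis by simp
  qed
  have L1: "(\<lambda>n. sintegral OmegaM (S (inverse (real (Suc n)))) (\<lambda>_. 1))
      \<longlonglongrightarrow> sintegral OmegaM (S 0) (\<lambda>_. 1)"
    by (rule cont_lim[OF c Omega_pos LIMSEQ_inverse_real_of_nat Omega_zero])
  have L2: "(\<lambda>n. sintegral OmegaM (S (- inverse (real (Suc n)))) (\<lambda>_. 1))
      \<longlonglongrightarrow> sintegral OmegaM (S 0) (\<lambda>_. 1)"
    by (rule cont_lim[OF c Omega_neg qn_lim Omega_zero])
  have "(\<lambda>n. 2::real) \<longlonglongrightarrow> sintegral OmegaM (S 0) (\<lambda>_. 1)" using L1 gp by simp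
  then have "sintegral OmegaM (S 0) (\<lambda>_. 1) = 2" using LIMSEQ_unique[OF tendsto_const] by metis
  moreover have "(\<lambda>n. 0::real) \<longlonglongrightarrow> sintegral OmegaM (S 0) (\<lambda>_. 1)" using L2 gq by simp
  then have "sintegral OmegaM (S 0) (\<lambda>_. 1) = 0" using LIMSEQ_unique[OF tendsto_const] by metis
  ultimately show False by simp
qed

theorem mainTheorem3:
  "\<exists>k. k \<in> sigma_Cb_ops OmegaM
     \<and> bounded_kernel OmegaM (\<lambda>x A. tv OmegaM (k x) A)
     \<and> \<not> Cb_invariant OmegaM (\<lambda>x A. tv OmegaM (k x) A)
     \<and> \<not> (\<exists>S. is_modulus_in OmegaM (sigma_Cb_ops OmegaM) k S)"
proof (intro exI[of _ k0] conjI)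
  show "k0 \<in> sigma_Cb_ops OmegaM" unfolding sigma_Cb_ops_def using k0_bk k0_cb by simp
  show "bounded_kernel OmegaM (\<lambda>x A. tv OmegaM (k0 x) A)" by (rule abs_bk)
  show "\<not> Cb_invariant OmegaM (\<lambda>x A. tv OmegaM (k0 x) A)" by (rule abs_not_cb)
  show "\<not> (\<exists>S. is_modulus_in OmegaM (sigma_Cb_ops OmegaM) k0 S)" by (rule no_mod)
qed


end
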